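(* For every odd integer $n\ge 7$, $$g_{odd}(\mathrm{Pet}(n,3))=\begin{cases}\frac{n}{3} & \text{if } 3\mid n,\\[2pt] \frac{n+8}{3} & \text{if } n\equiv 1\pmod 3,\\[2pt] \frac{n+10}{3} & \text{if } n\equiv 2\pmod 3.\end{cases}$$
   Context: For integers $n,k$ with $2<2k\le n$, the generalized Petersen graph $\mathrm{Pet}(n,k)$ has vertex set $\{u_0,\dots,u_{n-1}\}\cup\{v_0,\dots,v_{n-1}\}$ and edge set $\{u_iu_{i+1}\}\cup\{u_iv_i\}\cup\{v_iv_{i+k}\}$, indices modulo $n$. $g_{odd}(G)$ denotes the length of a shortest odd cycle of $G$. *)

theory Defs
  imports Main
begin

text \<open>Generalized Petersen graph Pet(n,k). Vertex (False, i) is u_i, vertex (True, i) is v_i,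
  for i < n. Edges: u_i u_{i+1}, u_i v_i, v_i v_{i+k}, indices modulo n.\<close>

definition pet_vertices :: "nat \<Rightarrow> (bool \<times> nat) set" where
  "pet_vertices n = UNIV \<times> {..<n}"

definition pet_edge0 :: "nat \<Rightarrow> nat \<Rightarrow> (bool \<times> nat) \<Rightarrow> (bool \<times> nat) \<Rightarrow> bool" where
  "pet_edge0 n k x y \<longleftrightarrow>
     (\<exists>i<n. (x = (False, i) \<and> y = (False, (i + 1) mod n))
          \<or> (x = (False, i) \<and> y = (True, i))
          \<or> (x = (True, i) \<and> y = (True, (i + k) mod n)))"

definition pet_adj :: "nat \<Rightarrow> nat \<Rightarrow> (bool \<times> nat) \<Rightarrow> (bool \<times> nat) \<Rightarrow> bool" where
  "pet_adj n k x y \<longleftrightarrow> x \<noteq> y \<and> (pet_edge0 n k x y \<or> pet_edge0 n k y x)"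

definition is_cycle :: "'a set \<Rightarrow> ('a \<Rightarrow> 'a \<Rightarrow> bool) \<Rightarrow> 'a list \<Rightarrow> bool" where
  "is_cycle V E c \<longleftrightarrow> length c \<ge> 3 \<and> distinct c \<and> set c \<subseteq> V
     \<and> (\<forall>i < length c. E (c ! i) (c ! ((i + 1) mod length c)))"

definition odd_girth :: "'a set \<Rightarrow> ('a \<Rightarrow> 'a \<Rightarrow> bool) \<Rightarrow> nat" where
  "odd_girth V E = (LEAST l. \<exists>c. is_cycle V E c \<and> length c = l \<and> odd l)"

end

theory Submission
  imports Defs
begin

definition disp :: "nat \<Rightarrow> bool\<times>nat \<Rightarrow> bool\<times>nat \<Rightarrow> int" where
"disp n x y = (if fst x = fst y then (if fst x then (if snd y = (snd x + 3) mod n then 3 else -3)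
   else (if snd y = (snd x + 1) mod n then 1 else -1)) else 0)"

lemma modlem: "int ((a + k) mod n) mod int n = (int a + int k) mod int n"
  by (simp add: zmod_int)

lemma disp_cong:
  assumes "pet_adj n 3 x y"
  shows "int (snd y) mod int n = (int (snd x) + disp n x y) mod int n"
proof -
  from assms obtain i where i: "i < n" and
    h: "(x = (False, i) \<and> y = (False, (i + 1) mod n))
          \<or> (x = (False, i) \<and> y = (True, i))
          \<or> (x = (True, i) \<and> y = (True, (i + 3) mod n))
     \<or> (y = (False, i) \<and> x = (False, (i + 1) mod n))
          \<or> (y = (False, i) \<and> x = (True, i))
          \<or> (y = (True, i) \<and> x = (True, (i + 3) mod n))"
    unfolding pet_adj_def pet_edge0_def by blast
  have r1: "int ((i+1) mod n) mod int n = (int i + 1) mod int n" using modlem[of i 1 n] by simp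
  have r3: "int ((i+3) mod n) mod int n = (int i + 3) mod int n" using modlem[of i 3 n] by simp
  have r1': "int i mod int n = (int ((i+1) mod n) + - 1) mod int n"
  proof -
    have "(int ((i+1) mod n) + - 1) mod int n = (int ((i+1) mod n) mod int n + - 1) mod int n"
      by (rule mod_add_left_eq[symmetric])
    also have "\<dots> = ((int i + 1) mod int n + - 1) mod int n" using r1 by simp
    also have "\<dots> = int i mod int n" by (subst mod_add_left_eq) simp
    finally show ?thesis by simp
  qed
  have r3': "int i mod int n = (int ((i+3) mod n) + - 3) mod int n"
  proof -
    have "(int ((i+3) mod n) + - 3) mod int n = (int ((i+3) mod n) mod int n + - 3) mod int n"
      by (rule mod_add_left_eq[symmetric])
    also have "\<dots> = ((int i + 3) mod int n + - 3) mod int n" using r3 by simp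
    also have "\<dots> = int i mod int n" by (subst mod_add_left_eq) simp
    finally show ?thesis by simp
  qed
  show ?thesis
  proof (cases "fst x = fst y")
    case False
    then have "snd y = snd x" using h by auto
    then show ?thesis using False by (simp add: disp_def)
  next
    case True
    show ?thesis
    proof (cases "fst x")
      case ft: True
      show ?thesis
      proof (cases "snd y = (snd x + 3) mod n")
        case True
        then show ?thesis using ft \<open>fst x = fst y\<close> by (simp add: disp_def modlem[of _ 3, simplified])
      next
        case False
        then show ?thesis using ft h r3' \<open>fst x = fst y\<close> by (auto simp: disp_def)
      qed
    next
      case ff: False
      show ?thesis
      proof (cases "snd y = (snd x + 1) mod n")
        case True
        then show ?thesis using ff \<open>fst x = fst y\<close> by (simp add: disp_def modlem[of _ 1, simplified])
      next
        case False
        then show ?thesis using ff h r1' \<open>fst x = fst y\<close> by (auto simp: disp_def)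
      qed
    qed
  qed
qed


lemma cyc_sum:
  fixes f :: "nat \<Rightarrow> 'a::comm_monoid_add"
  assumes "0 < L"
  shows "(\<Sum>i<L. f ((i+1) mod L)) = (\<Sum>i<L. f i)"
proof -
  obtain m where L: "L = Suc m" using assms by (cases L) auto
  have "(\<Sum>i<Suc m. f ((i+1) mod Suc m)) = (\<Sum>i<m. f ((i+1) mod Suc m)) + f 0"
    by (simp add: sum.lessThan_Suc)
  also have "(\<Sum>i<m. f ((i+1) mod Suc m)) = (\<Sum>i<m. f (Suc i))"
    by (rule sum.cong) auto
  also have "(\<Sum>i<m. f (Suc i)) + f 0 = (\<Sum>i<Suc m. f i)"
    unfolding sum.lessThan_Suc_shift by (rule add.commute)
  finally show ?thesis using L by simp
qed

lemma lower:
  assumes cyc: "is_cycle (pet_vertices n) (pet_adj n 3) c" and oL: "odd (length c)"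
    and on: "odd n" and n7: "n \<ge> 7"
  shows "(if n mod 3 = 0 then n div 3 else if n mod 3 = 1 then (n + 8) div 3 else (n + 10) div 3) \<le> length c"
proof -
  define L where "L = length c"
  have L0: "L > 0" using cyc unfolding is_cycle_def L_def by auto
  define nx where "nx i = (i+1) mod L" for i
  have nxL: "\<And>i. nx i < L" using L0 unfolding nx_def by auto
  have adj: "\<And>i. i < L \<Longrightarrow> pet_adj n 3 (c!i) (c!nx i)"
    using cyc unfolding is_cycle_def L_def nx_def by auto
  define d where "d i = disp n (c!i) (c!nx i)" for i
  define FF where "FF i = (\<not> fst (c!i) \<and> \<not> fst (c!nx i))" for i
  define TT where "TT i = (fst (c!i) \<and> fst (c!nx i))" for i
  define SP where "SP i = (fst (c!i) \<noteq> fst (c!nx i))" for i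
  define S where "S = (\<Sum>i<L. d i)"
  define A where "A = (\<Sum>i<L. if FF i then 1 else 0 :: int)"
  define B where "B = (\<Sum>i<L. if TT i then 1 else 0 :: int)"
  define Sp where "Sp = (\<Sum>i<L. if SP i then 1 else 0 :: int)"
  have A0': "A \<ge> 0" "B \<ge> 0" "Sp \<ge> 0" unfolding A_def B_def Sp_def by (auto intro: sum_nonneg)
  have LABS: "int L = A + B + Sp"
  proof -
    have "A + B + Sp = (\<Sum>i<L. (if FF i then 1 else 0) + (if TT i then 1 else 0) + (if SP i then 1 else 0 :: int))"
      unfolding A_def B_def Sp_def by (simp add: sum.distrib)
    also have "\<dots> = (\<Sum>i<L. (1::int))"
      by (rule sum.cong) (auto simp: FF_def TT_def SP_def)
    finally show ?thesis by simp
  qed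
  define g where "g i = int (snd (c!i))" for i
  have dvdS: "int n dvd S"
  proof -
    have "\<And>i. i \<in> {..<L} \<Longrightarrow> int n dvd (g (nx i) - (g i + d i))"
      using adj disp_cong unfolding g_def d_def by (simp add: mod_eq_dvd_iff)
    then have "int n dvd (\<Sum>i<L. g (nx i) - (g i + d i))" by (rule dvd_sum)
    also have "(\<Sum>i<L. g (nx i) - (g i + d i)) = (\<Sum>i<L. g (nx i)) - (\<Sum>i<L. g i) - S"
      unfolding S_def by (simp add: sum_subtractf sum.distrib)
    also have "(\<Sum>i<L. g (nx i)) = (\<Sum>i<L. g i)" unfolding nx_def using cyc_sum[OF L0] .
    finally show ?thesis by simp
  qed
  define bb where "bb i = (if fst (c!i) then 1 else 0 :: int)" for i
  have evSp: "even Sp"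
  proof -
    have "\<And>i. i \<in> {..<L} \<Longrightarrow> 2 dvd ((bb (nx i) - bb i) - (if SP i then 1 else 0))"
      unfolding bb_def SP_def by auto
    then have "2 dvd (\<Sum>i<L. (bb (nx i) - bb i) - (if SP i then 1 else 0))" by (rule dvd_sum)
    also have "(\<Sum>i<L. (bb (nx i) - bb i) - (if SP i then 1 else 0)) = (\<Sum>i<L. bb (nx i)) - (\<Sum>i<L. bb i) - Sp"
      unfolding Sp_def by (simp add: sum_subtractf)
    also have "(\<Sum>i<L. bb (nx i)) = (\<Sum>i<L. bb i)" unfolding nx_def using cyc_sum[OF L0] .
    finally show ?thesis by simp
  qed
  have parS: "even (S - (A + B))"
  proof -
    have "\<And>i. i \<in> {..<L} \<Longrightarrow> 2 dvd (d i - ((if FF i then 1 else 0) + (if TT i then 1 else 0)))"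
      unfolding d_def FF_def TT_def disp_def by auto
    then have "2 dvd (\<Sum>i<L. d i - ((if FF i then 1 else 0) + (if TT i then 1 else 0)))" by (rule dvd_sum)
    also have "(\<Sum>i<L. d i - ((if FF i then 1 else 0) + (if TT i then 1 else 0))) = S - (A + B)"
      unfolding S_def A_def B_def by (simp add: sum_subtractf sum.distrib)
    finally show ?thesis .
  qed
  have absS: "\<bar>S\<bar> \<le> A + 3 * B"
  proof -
    have "\<bar>S\<bar> \<le> (\<Sum>i<L. \<bar>d i\<bar>)" unfolding S_def by (rule sum_abs)
    also have "\<dots> \<le> (\<Sum>i<L. (if FF i then 1 else 0) + 3 * (if TT i then 1 else 0))"
      by (rule sum_mono) (auto simp: d_def FF_def TT_def disp_def)
    also have "\<dots> = A + 3 * B" unfolding A_def B_def by (simp add: sum.distrib sum_distrib_left)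
    finally show ?thesis .
  qed
  have A3: "A = 0 \<Longrightarrow> 3 dvd S"
  proof -
    assume "A = 0"
    then have "\<forall>i\<in>{..<L}. (if FF i then 1 else 0 :: int) = 0"
      unfolding A_def by (subst sum_nonneg_eq_0_iff[symmetric]) auto
    then have nf: "\<And>i. i \<in> {..<L} \<Longrightarrow> \<not> FF i"
    proof -
      fix i assume "i \<in> {..<L}"
      with \<open>\<forall>i\<in>{..<L}. (if FF i then 1 else 0 :: int) = 0\<close> have "(if FF i then 1 else 0 :: int) = 0" by blast
      then show "\<not> FF i" by (cases "FF i") auto
    qed
    have "\<And>i. i \<in> {..<L} \<Longrightarrow> 3 dvd d i"
    proof -
      fix i assume "i \<in> {..<L}"
      then have "\<not> FF i" by (rule nf)
      then show "3 dvd d i" unfolding FF_def d_def disp_def by auto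
    qed
    then show "3 dvd S" unfolding S_def by (rule dvd_sum)
  qed
  have ABSp: "A > 0 \<Longrightarrow> B > 0 \<Longrightarrow> Sp > 0"
  proof -
    assume "A > 0" "B > 0"
    have "\<exists>i<L. FF i"
    proof (rule ccontr)
      assume "\<not> (\<exists>i<L. FF i)"
      then have "A = 0" unfolding A_def by (intro sum.neutral) auto
      with \<open>A > 0\<close> show False by simp
    qed
    then obtain i where i: "i < L" "FF i" by blast
    have "\<exists>i<L. TT i"
    proof (rule ccontr)
      assume "\<not> (\<exists>i<L. TT i)"
      then have "B = 0" unfolding B_def by (intro sum.neutral) auto
      with \<open>B > 0\<close> show False by simp
    qed
    then obtain j where j: "j < L" "TT j" by blast
    have "\<exists>k<L. SP k"
    proof (rule ccontr)
      assume no: "\<not> (\<exists>k<L. SP k)"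
      have "\<And>k. k < L \<Longrightarrow> fst (c!k) = fst (c!0)"
      proof -
        fix k show "k < L \<Longrightarrow> fst (c!k) = fst (c!0)"
        proof (induction k)
          case (Suc k)
          then have "nx k = Suc k" unfolding nx_def by simp
          then show ?case using Suc no unfolding SP_def by (metis Suc_lessD)
        qed simp
      qed
      then show False using i j unfolding FF_def TT_def by metis
    qed
    then obtain k where "k < L" "SP k" by blast
    then have "(if SP k then 1 else 0 :: int) \<le> Sp" unfolding Sp_def
      by (intro member_le_sum) auto
    then show "Sp > 0" using \<open>SP k\<close> by simp
  qed
  have oS: "odd S"
  proof -
    have "odd (int L)" using oL unfolding L_def by simp
    then have "odd (A + B)" using LABS evSp by simp
    then show ?thesis using parS by presburger
  qed
  obtain m where m: "S = int n * m" using dvdS by blast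
  have absm: "\<bar>S\<bar> = int n * \<bar>m\<bar>" using m by (simp add: abs_mult)
  have m0: "m \<noteq> 0" using oS m by auto
  have Sn: "\<bar>S\<bar> \<ge> int n" using absm m0
    by (metis abs_ge_zero mult.right_neutral mult_left_mono of_nat_0_le_iff zero_less_abs_iff int_one_le_iff_zero_less)
  have key: "L \<ge> n \<or> (3 dvd n \<and> 3 * L \<ge> n) \<or> 3 * L \<ge> n + 8"
  proof (cases "B = 0")
    case True
    then have "int L \<ge> int n" using LABS absS Sn A0' by linarith
    then show ?thesis by simp
  next
    case Bn: False
    show ?thesis
    proof (cases "A = 0")
      case True
      then have s3: "3 dvd S" by (rule A3)
      show ?thesis
      proof (cases "3 dvd n")
        case True
        then have "3 * int L \<ge> int n" using LABS absS Sn A0' \<open>A = 0\<close> by linarith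
        then show ?thesis using True by linarith
      next
        case False
        have "\<bar>m\<bar> \<noteq> 1"
        proof
          assume "\<bar>m\<bar> = 1"
          then have "\<bar>S\<bar> = int n" using absm by simp
          then have "3 dvd int n" using s3 by (metis dvd_abs_iff)
          then show False using False by presburger
        qed
        moreover have "odd m" using oS m by simp
        ultimately have "\<bar>m\<bar> \<ge> 3" using m0 by presburger
        then have "3 * int n \<le> \<bar>m\<bar> * int n" by (rule mult_right_mono) simp
        then have "\<bar>S\<bar> \<ge> 3 * int n" using absm by (simp add: mult.commute)
        then have "int L \<ge> int n" using LABS absS A0' \<open>A = 0\<close> by linarith
        then show ?thesis by simp
      qed
    next
      case False
      then have "Sp > 0" using ABSp Bn A0' by simp
      then have "Sp \<ge> 2" using evSp by presburger
      then have "3 * int L \<ge> int n + 8" using LABS absS Sn A0' False by linarith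
      then show ?thesis by linarith
    qed
  qed
  define t where "t = n div 3"
  have nt: "n = 3 * t + n mod 3" unfolding t_def by simp
  have t2: "t \<ge> 2" using n7 unfolding t_def by simp
  consider "n mod 3 = 0" | "n mod 3 = 1" | "n mod 3 = 2" by linarith
  then show ?thesis
  proof cases
    case 1
    then have "n = 3 * t" using nt by simp
    then have "t \<le> L" using key by auto
    then show ?thesis using 1 unfolding L_def t_def by simp
  next
    case 2
    then have e: "n = 3 * t + 1" using nt by simp
    then have "(n + 8) div 3 = t + 3" by simp
    moreover have "t + 3 \<le> L"
    proof -
      have "3 dvd n \<Longrightarrow> False" using 2 by auto
      then have "L \<ge> n \<or> 3 * L \<ge> n + 8" using key by blast
      then show ?thesis using e t2 by auto
    qed
    ultimately show ?thesis using 2 unfolding L_def by simp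
  next
    case 3
    then have e: "n = 3 * t + 2" using nt by simp
    then have "(n + 10) div 3 = t + 4" by simp
    moreover have "t + 4 \<le> L"
    proof -
      have "3 dvd n \<Longrightarrow> False" using 3 by auto
      then have "L \<ge> n \<or> 3 * L \<ge> n + 8" using key by blast
      then show ?thesis using e t2 by auto
    qed
    ultimately show ?thesis using 3 unfolding L_def by simp
  qed
qed

lemma adj_in: assumes "i < n" "n > 3" shows "pet_adj n 3 (True,i) (True,(i+3) mod n)"
proof -
  have "(i+3) mod n \<noteq> i"
  proof (cases "i+3 < n")
    case True then show ?thesis by simp
  next
    case False
    then have "(i+3) mod n = i + 3 - n" using assms by (simp add: mod_if)
    then show ?thesis using assms False by simp
  qed
  then show ?thesis using assms unfolding pet_adj_def pet_edge0_def by auto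
qed

lemma adj_out: assumes "i < n" "n > 3" shows "pet_adj n 3 (False,i) (False,(i+1) mod n)"
proof -
  have "(i+1) mod n \<noteq> i"
  proof (cases "i+1 < n")
    case True then show ?thesis by simp
  next
    case False
    then have "(i+1) mod n = i + 1 - n" using assms by (simp add: mod_if)
    then show ?thesis using assms False by simp
  qed
  then show ?thesis using assms unfolding pet_adj_def pet_edge0_def by auto
qed

lemma adj_sp1: assumes "i < n" shows "pet_adj n 3 (False,i) (True,i)"
  using assms unfolding pet_adj_def pet_edge0_def by auto

lemma adj_sp2: assumes "i < n" shows "pet_adj n 3 (True,i) (False,i)"
  using assms unfolding pet_adj_def pet_edge0_def by auto

lemma cycA:
  assumes "n = 3 * q" "q \<ge> 3"
  shows "is_cycle (pet_vertices n) (pet_adj n 3) (map (\<lambda>j. (True, 3*j)) [0..<q])"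
  unfolding is_cycle_def
proof (intro conjI allI impI)
  show "3 \<le> length (map (\<lambda>j. (True, 3*j)) [0..<q])" using assms by simp
  show "distinct (map (\<lambda>j. (True, 3*j)) [0..<q])" by (simp add: distinct_map inj_on_def)
  show "set (map (\<lambda>j. (True, 3*j)) [0..<q]) \<subseteq> pet_vertices n"
    using assms by (auto simp: pet_vertices_def)
  fix i assume i: "i < length (map (\<lambda>j. (True, 3*j)) [0..<q])"
  then have iq: "i < q" by simp
  have "pet_adj n 3 (True, 3*i) (True, (3*i+3) mod n)" using adj_in assms iq by simp
  moreover have "(3*i+3) mod n = 3 * ((i+1) mod q)"
    using assms mod_mult_mult1[of 3 "i+1" q] by (simp add: add.commute)
  ultimately show "pet_adj n 3 (map (\<lambda>j. (True, 3*j)) [0..<q] ! i)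
      (map (\<lambda>j. (True, 3*j)) [0..<q] ! ((i + 1) mod length (map (\<lambda>j. (True, 3*j)) [0..<q])))"
    using iq by simp
qed

definition hB :: "nat \<Rightarrow> nat \<Rightarrow> nat \<Rightarrow> bool \<times> nat" where
  "hB q r i = (if i \<le> q then (True, 3*i) else if i \<le> q + r then (False, 3*q + (i - q - 1)) else (False, 0))"

lemma cycB:
  assumes "n = 3 * q + r" "r \<ge> 1" "r \<le> 2" "q \<ge> 2"
  shows "is_cycle (pet_vertices n) (pet_adj n 3) (map (hB q r) [0..<q+r+2])"
  unfolding is_cycle_def
proof (intro conjI allI impI)
  show "3 \<le> length (map (hB q r) [0..<q+r+2])" using assms by simp
  show "distinct (map (hB q r) [0..<q+r+2])" 
    unfolding distinct_map using assms by (auto simp: inj_on_def hB_def split: if_splits)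
  show "set (map (hB q r) [0..<q+r+2]) \<subseteq> pet_vertices n"
    using assms by (auto simp: pet_vertices_def hB_def)
  fix i assume i: "i < length (map (hB q r) [0..<q+r+2])"
  then have iq: "i < q+r+2" by simp
  have n3: "n > 3" using assms by simp
  have "pet_adj n 3 (hB q r i) (hB q r ((i+1) mod (q+r+2)))"
  proof -
    consider "i < q" | "i = q" | "q < i \<and> i < q + r" | "i = q + r" | "i = q + r + 1" using iq by linarith
    then show ?thesis
    proof cases
      case 1
      have lt: "3*i < n" using 1 assms by simp
      have "(3*i+3) mod n = 3*i+3" using 1 assms by simp
      then have "pet_adj n 3 (True, 3*i) (True, 3*i+3)" using adj_in[OF lt n3] by simp
      then show ?thesis using 1 by (simp add: hB_def add.commute)
    next
      case 2
      then show ?thesis using adj_sp2[of "3*q" n] assms by (simp add: hB_def)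
    next
      case 3
      have lt: "3*q + (i-q-1) < n" using 3 assms by simp
      have "(3*q + (i-q-1)+1) mod n = 3*q + (i-q-1)+1" using 3 assms by simp
      then have "pet_adj n 3 (False, 3*q + (i-q-1)) (False, 3*q + (i-q-1)+1)" using adj_out[OF lt n3] by simp
      then show ?thesis using 3 by (simp add: hB_def)
    next
      case 4
      have lt: "3*q + (i-q-1) < n" using 4 assms by simp
      have "(3*q + (i-q-1)+1) mod n = 0" using 4 assms by simp
      then have "pet_adj n 3 (False, 3*q + (i-q-1)) (False, 0)" using adj_out[OF lt n3] by simp
      then show ?thesis using 4 assms by (simp add: hB_def)
    next
      case 5
      then show ?thesis using adj_sp1[of 0 n] assms by (simp add: hB_def)
    qed
  qed
  then show "pet_adj n 3 (map (hB q r) [0..<q+r+2] ! i)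
      (map (hB q r) [0..<q+r+2] ! ((i + 1) mod length (map (hB q r) [0..<q+r+2])))"
  proof -
    have l: "length (map (hB q r) [0..<q+r+2]) = q+r+2" by (simp del: upt_Suc)
    have e1: "map (hB q r) [0..<q+r+2] ! i = hB q r i" using iq by (simp del: upt_Suc)
    have "(i+1) mod (q+r+2) < q+r+2" by simp
    then have e2: "map (hB q r) [0..<q+r+2] ! ((i+1) mod (q+r+2)) = hB q r ((i+1) mod (q+r+2))"
      by (simp del: upt_Suc)
    show ?thesis unfolding l e1 e2 by fact
  qed
qed


theorem mainTheorem20:
  fixes n :: nat
  assumes "odd n" and "n \<ge> 7"
  shows "odd_girth (pet_vertices n) (pet_adj n 3) =
           (if n mod 3 = 0 then n div 3
            else if n mod 3 = 1 then (n + 8) div 3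
            else (n + 10) div 3)"
proof -
  define T where "T = (if n mod 3 = 0 then n div 3
            else if n mod 3 = 1 then (n + 8) div 3
            else (n + 10) div 3)"
  define q where "q = n div 3"
  have ex: "\<exists>c. is_cycle (pet_vertices n) (pet_adj n 3) c \<and> length c = T \<and> odd T"
  proof -
    consider "n mod 3 = 0" | "n mod 3 = 1" | "n mod 3 = 2" by linarith
    then show ?thesis
    proof cases
      case 1
      then have "n = 3*q" "q \<ge> 3" "T = q" "odd q" using assms unfolding q_def T_def by presburger+
      then show ?thesis using cycA[of n q] by (intro exI[of _ "map (\<lambda>j. (True, 3*j)) [0..<q]"]) simp
    next
      case 2
      then have "n = 3*q + 1" "q \<ge> 2" "T = q + 1 + 2" "odd T" using assms unfolding q_def T_def by presburger+
      then show ?thesis using cycB[of n q 1] by (intro exI[of _ "map (hB q 1) [0..<q+1+2]"]) (simp del: upt_Suc)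
    next
      case 3
      then have "n = 3*q + 2" "q \<ge> 2" "T = q + 2 + 2" "odd T" using assms unfolding q_def T_def by presburger+
      then show ?thesis using cycB[of n q 2] by (intro exI[of _ "map (hB q 2) [0..<q+2+2]"]) (simp del: upt_Suc)
    qed
  qed
  show ?thesis unfolding odd_girth_def T_def[symmetric]
  proof (rule Least_equality)
    show "\<exists>c. is_cycle (pet_vertices n) (pet_adj n 3) c \<and> length c = T \<and> odd T" by (rule ex)
  next
    fix l assume "\<exists>c. is_cycle (pet_vertices n) (pet_adj n 3) c \<and> length c = l \<and> odd l"
    then obtain c where c: "is_cycle (pet_vertices n) (pet_adj n 3) c" "length c = l" "odd l" by blast
    show "T \<le> l" using lower[OF c(1) _ assms] c unfolding T_def by simp
  qed
qed

end
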